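(* The rational function \[ \psi_{32}(z)=\frac{\frac{1246}{384649}z^3+\frac{2289}{34970}z^2+\frac{119}{269}z+1}{-\frac{4}{327}z^3+\frac{8}{65}z^2-\frac{150}{269}z+1} \] belongs to $\Pi_{3/3,2}$ and satisfies $R(\psi_{32})=x_0\approx 6.778307398$, where $x_0$ is the smallest real root of \[ 43572620x^3-880461561x^2+5950520030x-13451175530=0. \] In particular $R_{3/3,2}>6$.
   Context: A real rational function $\psi$ is always considered in lowest terms, as a smooth function on $\mathbb{R}$ minus its finitely many poles. It is absolutely monotonic at $x\in\mathbb{R}$ if $x$ is not a pole and $\psi^{(k)}(x)\ge 0$ for all integers $k\ge 0$. The radius of absolute monotonicity is $R(\psi)=\sup\big(\{r\in[0,\infty): \psi \text{ is absolutely monotonic at each point of } [-r,0]\}\cup\{0\}\big)\in[0,+\infty]$. For $m,n,p\in\mathbb{N}$, $\Pi_{m/n,p}$ denotes the set of rational functions $\psi=P/Q$ with $P,Q$ real polynomials, $\deg P\le m$, $Q\not\equiv 0$, $\deg Q\le n$, such that $\psi(z)-e^z=O(z^{p+1})$ as $z\to 0$. Finally, $R_{m/n,p}=\sup\{R(\psi):\psi\in\Pi_{m/n,p}\}$. *)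

theory Defs
  imports "HOL-Analysis.Analysis" "HOL-Computational_Algebra.Polynomial_Factorial" "HOL-Computational_Algebra.Field_as_Ring"
    "HOL-Library.Landau_Symbols"
begin

text \<open>A real rational function is given by a pair (P, Q) of real polynomials with Q nonzero.
  As a function it is taken in lowest terms: we cancel the gcd of P and Q.\<close>

definition red_num :: "real poly \<Rightarrow> real poly \<Rightarrow> real poly" where
  "red_num P Q = P div gcd P Q"

definition red_den :: "real poly \<Rightarrow> real poly \<Rightarrow> real poly" where
  "red_den P Q = Q div gcd P Q"

definition ratfun :: "real poly \<Rightarrow> real poly \<Rightarrow> real \<Rightarrow> real" where
  "ratfun P Q x = poly (red_num P Q) x / poly (red_den P Q) x"

definition abs_monotonic_at :: "real poly \<Rightarrow> real poly \<Rightarrow> real \<Rightarrow> bool" where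
  "abs_monotonic_at P Q x \<longleftrightarrow>
     poly (red_den P Q) x \<noteq> 0 \<and> (\<forall>k::nat. (deriv ^^ k) (ratfun P Q) x \<ge> 0)"

definition radius_am :: "real poly \<Rightarrow> real poly \<Rightarrow> ereal" where
  "radius_am P Q = Sup (ereal ` ({r. r \<ge> 0 \<and> (\<forall>x\<in>{-r..0}. abs_monotonic_at P Q x)} \<union> {0}))"

definition Pi_class :: "nat \<Rightarrow> nat \<Rightarrow> nat \<Rightarrow> (real poly \<times> real poly) set" where
  "Pi_class m n p = {(P, Q). degree P \<le> m \<and> Q \<noteq> 0 \<and> degree Q \<le> n \<and>
     (\<lambda>z. poly P z / poly Q z - exp z) \<in> O[at (0::real)](\<lambda>z. z ^ (p + 1))}"

definition R_opt :: "nat \<Rightarrow> nat \<Rightarrow> nat \<Rightarrow> ereal" where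
  "R_opt m n p = Sup ((\<lambda>(P, Q). radius_am P Q) ` Pi_class m n p)"

definition psi32_num :: "real poly" where
  "psi32_num = [: 1, 119/269, 2289/34970, 1246/384649 :]"

definition psi32_den :: "real poly" where
  "psi32_den = [: 1, -150/269, 8/65, -4/327 :]"

definition x0_cubic :: "real \<Rightarrow> real" where
  "x0_cubic x = 43572620 * x^3 - 880461561 * x^2 + 5950520030 * x - 13451175530"

end

theory Submission
  imports Defs "HOL-Analysis.FPS_Convergence" "HOL-Real_Asymp.Real_Asymp"
begin

lemma psd3:
  fixes a b c d e f x y z :: real
  assumes "a > 0" "a*b - d^2 > 0" "(a*b-d^2)*(a*c-e^2) - (a*f-d*e)^2 \<ge> 0"
  shows "a*x^2 + b*y^2 + c*z^2 + 2*d*x*y + 2*e*x*z + 2*f*y*z \<ge> 0"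
proof -
  define B where "B = a*b-d^2"
  define C where "C = a*c-e^2"
  define E where "E = a*f-d*e"
  have B: "B > 0" using assms B_def by simp
  have h1: "a*(a*x^2 + b*y^2 + c*z^2 + 2*d*x*y + 2*e*x*z + 2*f*y*z) = (a*x+d*y+e*z)^2 + (B*y^2 + C*z^2 + 2*E*y*z)"
    unfolding B_def C_def E_def by (simp add: power2_eq_square algebra_simps)
  have h2: "B*(B*y^2 + C*z^2 + 2*E*y*z) = (B*y+E*z)^2 + (B*C-E^2)*z^2"
    by (simp add: power2_eq_square algebra_simps)
  have "B*C-E^2 \<ge> 0" using assms(3) unfolding B_def C_def E_def .
  hence "B*(B*y^2 + C*z^2 + 2*E*y*z) \<ge> 0" unfolding h2 by (intro add_nonneg_nonneg) auto
  hence "B*y^2 + C*z^2 + 2*E*y*z \<ge> 0" using B by (simp add: zero_le_mult_iff)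
  hence "a*(a*x^2 + b*y^2 + c*z^2 + 2*d*x*y + 2*e*x*z + 2*f*y*z) \<ge> 0" unfolding h1 by simp
  thus ?thesis using assms(1) by (simp add: zero_le_mult_iff)
qed

lemma socG:
  fixes l m1 m2 ua ub uc :: real
  assumes "0 \<le> l" "m1^2 + m2^2 \<le> l^2" "ub^2 + uc^2 \<le> ua^2" "0 \<le> ua"
  shows "0 \<le> ua*l + ub*m1 + uc*m2"
proof -
  have cs: "(ub*m1 + uc*m2)^2 \<le> (ub^2+uc^2)*(m1^2+m2^2)"
  proof -
    have "(ub^2+uc^2)*(m1^2+m2^2) - (ub*m1 + uc*m2)^2 = (ub*m2 - uc*m1)^2"
      by (simp add: power2_eq_square algebra_simps)
    thus ?thesis by (metis diff_ge_0_iff_ge zero_le_power2)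
  qed
  also have "\<dots> \<le> ua^2 * l^2"
    using assms by (intro mult_mono) auto
  also have "\<dots> = (ua*l)^2" by (simp add: power_mult_distrib)
  finally have "(ub*m1 + uc*m2)^2 \<le> (ua*l)^2" .
  hence "\<bar>ub*m1 + uc*m2\<bar> \<le> \<bar>ua*l\<bar>" using abs_le_square_iff by blast
  moreover have "\<bar>ua*l\<bar> = ua*l" using assms by simp
  ultimately show ?thesis by linarith
qed

lemma quad_expand:
  fixes p0 p1 p2 q0 q1 q2 r0 r1 r2 x y z :: real
  shows "(p0*x+p1*y+p2*z)^2 - (q0*x+q1*y+q2*z)^2 - (r0*x+r1*y+r2*z)^2
    = (p0*p0-q0*q0-r0*r0)*x^2 + (p1*p1-q1*q1-r1*r1)*y^2 + (p2*p2-q2*q2-r2*r2)*z^2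
      + 2*(p0*p1-q0*q1-r0*r1)*x*y + 2*(p0*p2-q0*q2-r0*r2)*x*z + 2*(p1*p2-q1*q2-r1*r2)*y*z"
  by (simp add: power2_eq_square algebra_simps)

lemma lin_comb:
  fixes l0 l1 l2 p0 p1 p2 q0 q1 q2 c0 c1 c2 ua ub uc x y z :: real
  assumes "c0 = ua*l0+ub*p0+uc*q0" "c1 = ua*l1+ub*p1+uc*q1" "c2 = ua*l2+ub*p2+uc*q2"
  shows "c0*x+c1*y+c2*z = ua*(l0*x+l1*y+l2*z) + ub*(p0*x+p1*y+p2*z) + uc*(q0*x+q1*y+q2*z)"
  unfolding assms by (simp add: algebra_simps)

lemma cone_step:
  fixes l0 l1 l2 p0 p1 p2 q0 q1 q2 ga be al tau ua ub uc x y z :: real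
  assumes h: "0 \<le> l0*x+l1*y+l2*z" "(p0*x+p1*y+p2*z)^2 + (q0*x+q1*y+q2*z)^2 \<le> (l0*x+l1*y+l2*z)^2"
  and tau: "0 \<le> tau"
  and lin: "l2*ga = ua*l0+ub*p0+uc*q0" "l0 + l2*be = ua*l1+ub*p1+uc*q1" "l1 + l2*al = ua*l2+ub*p2+uc*q2"
  and u: "ub^2+uc^2 \<le> ua^2" "0 \<le> ua"
  and c1: "((l2*ga)*(l2*ga)-(p2*ga)*(p2*ga)-(q2*ga)*(q2*ga) - tau*(l0*l0-p0*p0-q0*q0)) > 0" and c2: "((l2*ga)*(l2*ga)-(p2*ga)*(p2*ga)-(q2*ga)*(q2*ga) - tau*(l0*l0-p0*p0-q0*q0))*((l0+l2*be)*(l0+l2*be)-(p0+p2*be)*(p0+p2*be)-(q0+q2*be)*(q0+q2*be) - tau*(l1*l1-p1*p1-q1*q1)) - ((l2*ga)*(l0+l2*be)-(p2*ga)*(p0+p2*be)-(q2*ga)*(q0+q2*be) - tau*(l0*l1-p0*p1-q0*q1))^2 > 0" and c3: "(((l2*ga)*(l2*ga)-(p2*ga)*(p2*ga)-(q2*ga)*(q2*ga) - tau*(l0*l0-p0*p0-q0*q0))*((l0+l2*be)*(l0+l2*be)-(p0+p2*be)*(p0+p2*be)-(q0+q2*be)*(q0+q2*be) - tau*(l1*l1-p1*p1-q1*q1)) - ((l2*ga)*(l0+l2*be)-(p2*ga)*(p0+p2*be)-(q2*ga)*(q0+q2*be) - tau*(l0*l1-p0*p1-q0*q1))^2)*(((l2*ga)*(l2*ga)-(p2*ga)*(p2*ga)-(q2*ga)*(q2*ga)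 - tau*(l0*l0-p0*p0-q0*q0))*((l1+l2*al)*(l1+l2*al)-(p1+p2*al)*(p1+p2*al)-(q1+q2*al)*(q1+q2*al) - tau*(l2*l2-p2*p2-q2*q2))-((l2*ga)*(l1+l2*al)-(p2*ga)*(p1+p2*al)-(q2*ga)*(q1+q2*al) - tau*(l0*l2-p0*p2-q0*q2))^2) - (((l2*ga)*(l2*ga)-(p2*ga)*(p2*ga)-(q2*ga)*(q2*ga) - tau*(l0*l0-p0*p0-q0*q0))*((l0+l2*be)*(l1+l2*al)-(p0+p2*be)*(p1+p2*al)-(q0+q2*be)*(q1+q2*al) - tau*(l1*l2-p1*p2-q1*q2))-((l2*ga)*(l0+l2*be)-(p2*ga)*(p0+p2*be)-(q2*ga)*(q0+q2*be) - tau*(l0*l1-p0*p1-q0*q1))*((l2*ga)*(l1+l2*al)-(p2*ga)*(p1+p2*al)-(q2*ga)*(q1+q2*al) - tau*(l0*l2-p0*p2-q0*q2)))^2 \<ge> 0"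
  shows "0 \<le> l0*y+l1*z+l2*(ga*x+be*y+al*z) \<and>
    (p0*y+p1*z+p2*(ga*x+be*y+al*z))^2 + (q0*y+q1*z+q2*(ga*x+be*y+al*z))^2 \<le> (l0*y+l1*z+l2*(ga*x+be*y+al*z))^2"
proof
  have e: "l0*y+l1*z+l2*(ga*x+be*y+al*z) = (l2*ga)*x + (l0+l2*be)*y + (l1+l2*al)*z"
    by (simp add: algebra_simps)
  show "0 \<le> l0*y+l1*z+l2*(ga*x+be*y+al*z)"
    unfolding e lin_comb[OF lin] using socG[OF h u] .
  have e2: "\<And>l0 l1 l2::real. l0*y+l1*z+l2*(ga*x+be*y+al*z) = (l2*ga)*x + (l0+l2*be)*y + (l1+l2*al)*z"
    by (simp add: algebra_simps)
  have "(l0*y+l1*z+l2*(ga*x+be*y+al*z))^2 - (p0*y+p1*z+p2*(ga*x+be*y+al*z))^2 - (q0*y+q1*z+q2*(ga*x+be*y+al*z))^2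
     - tau * ((l0*x+l1*y+l2*z)^2 - (p0*x+p1*y+p2*z)^2 - (q0*x+q1*y+q2*z)^2)
     = ((l2*ga)*(l2*ga)-(p2*ga)*(p2*ga)-(q2*ga)*(q2*ga) - tau*(l0*l0-p0*p0-q0*q0))*x^2 + ((l0+l2*be)*(l0+l2*be)-(p0+p2*be)*(p0+p2*be)-(q0+q2*be)*(q0+q2*be) - tau*(l1*l1-p1*p1-q1*q1))*y^2 + ((l1+l2*al)*(l1+l2*al)-(p1+p2*al)*(p1+p2*al)-(q1+q2*al)*(q1+q2*al) - tau*(l2*l2-p2*p2-q2*q2))*z^2 + 2*((l2*ga)*(l0+l2*be)-(p2*ga)*(p0+p2*be)-(q2*ga)*(q0+q2*be) - tau*(l0*l1-p0*p1-q0*q1))*x*y + 2*((l2*ga)*(l1+l2*al)-(p2*ga)*(p1+p2*al)-(q2*ga)*(q1+q2*al) - tau*(l0*l2-p0*p2-q0*q2))*x*z + 2*((l0+l2*be)*(l1+l2*al)-(p0+p2*be)*(p1+p2*al)-(q0+q2*be)*(q1+q2*al) - tau*(l1*l2-p1*p2-q1*q2))*y*z"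
    unfolding e2 quad_expand by (simp add: algebra_simps)
  also have "\<dots> \<ge> 0" by (rule psd3[OF c1 c2 c3])
  finally have "(l0*y+l1*z+l2*(ga*x+be*y+al*z))^2 - (p0*y+p1*z+p2*(ga*x+be*y+al*z))^2 - (q0*y+q1*z+q2*(ga*x+be*y+al*z))^2
     \<ge> tau * ((l0*x+l1*y+l2*z)^2 - (p0*x+p1*y+p2*z)^2 - (q0*x+q1*y+q2*z)^2)" by simp
  moreover have "tau * ((l0*x+l1*y+l2*z)^2 - (p0*x+p1*y+p2*z)^2 - (q0*x+q1*y+q2*z)^2) \<ge> 0"
    using tau h(2) by simp
  ultimately show "(p0*y+p1*z+p2*(ga*x+be*y+al*z))^2 + (q0*y+q1*z+q2*(ga*x+be*y+al*z))^2 \<le> (l0*y+l1*z+l2*(ga*x+be*y+al*z))^2"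
    by linarith
qed

lemma cone_decay:
  fixes l0 l1 l2 p0 p1 p2 q0 q1 q2 ga be al ua ub uc x y z :: real
  assumes h: "0 \<le> l0*x+l1*y+l2*z" "(p0*x+p1*y+p2*z)^2 + (q0*x+q1*y+q2*z)^2 \<le> (l0*x+l1*y+l2*z)^2"
  and lin: "l2*ga = ua*l0+ub*p0+uc*q0" "l0 + l2*be = ua*l1+ub*p1+uc*q1" "l1 + l2*al = ua*l2+ub*p2+uc*q2"
  and u: "ub^2+uc^2 \<le> (1-ua)^2" "ua \<le> 1"
  shows "l0*y+l1*z+l2*(ga*x+be*y+al*z) \<le> l0*x+l1*y+l2*z"
proof -
  have e: "l0*y+l1*z+l2*(ga*x+be*y+al*z) = (l2*ga)*x + (l0+l2*be)*y + (l1+l2*al)*z"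
    by (simp add: algebra_simps)
  have "(-ub)^2+(-uc)^2 \<le> (1-ua)^2" using u by simp
  from socG[OF h this] u have "0 \<le> (1-ua)*(l0*x+l1*y+l2*z) + (-ub)*(p0*x+p1*y+p2*z) + (-uc)*(q0*x+q1*y+q2*z)"
    by simp
  thus ?thesis unfolding e lin_comb[OF lin] by (simp add: algebra_simps)
qed

lemma cone_bound:
  fixes l0 l1 l2 p0 p1 p2 q0 q1 q2 ua ub uc x y z :: real
  assumes h: "0 \<le> l0*x+l1*y+l2*z" "(p0*x+p1*y+p2*z)^2 + (q0*x+q1*y+q2*z)^2 \<le> (l0*x+l1*y+l2*z)^2"
  and lin: "1 = ua*l0+ub*p0+uc*q0" "0 = ua*l1+ub*p1+uc*q1" "0 = ua*l2+ub*p2+uc*q2"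
  and u: "ub^2+uc^2 \<le> ua^2" "0 \<le> ua" "ub^2+uc^2 \<le> (2-ua)^2" "ua \<le> 2"
  shows "0 \<le> x \<and> x \<le> 2*(l0*x+l1*y+l2*z)"
proof -
  have e: "x = 1*x+0*y+0*z" by simp
  have x: "x = ua*(l0*x+l1*y+l2*z) + ub*(p0*x+p1*y+p2*z) + uc*(q0*x+q1*y+q2*z)"
    by (subst e, rule lin_comb[OF lin])
  have "(-ub)^2+(-uc)^2 \<le> (2-ua)^2" using u by simp
  from socG[OF h this] u have "0 \<le> (2-ua)*(l0*x+l1*y+l2*z) + (-ub)*(p0*x+p1*y+p2*z) + (-uc)*(q0*x+q1*y+q2*z)"
    by simp
  moreover have "0 \<le> ua*(l0*x+l1*y+l2*z) + ub*(p0*x+p1*y+p2*z) + uc*(q0*x+q1*y+q2*z)"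
    using socG[OF h u(1,2)] .
  ultimately show ?thesis using x by (simp add: algebra_simps)
qed

definition "alC = ((132105288195229860/48098875986026039)::real)"
definition "beC = ((- 125555150451831600/48098875986026039)::real)"
definition "gaC = ((41305844946860000/48098875986026039)::real)"
definition "deltaC = (48098875986026039::real)"
definition "EC = (37002369098297859750622::real)"
fun BB :: "nat \<Rightarrow> int" where
  "BB 0 = -433418765223"
| "BB (Suc 0) = 1888717687956595658419024745123355300"
| "BB (Suc (Suc 0)) = 9033510804520889223714137694139473177537774184500"
| "BB (Suc (Suc (Suc 0))) = 924975031752167027814241962679093397954802451580523741593847186075210000"
| "BB (Suc (Suc (Suc (Suc k)))) = 132105288195229860 * BB (Suc (Suc (Suc k))) + -6039061610989489325518572843032400 * BB (Suc (Suc k)) + 95561149572716542473987943162076437848636254060000 * BB (Suc k)"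
lemma BB_rec: "BB (k+4) = 132105288195229860 * BB (k+3) + -6039061610989489325518572843032400 * BB (k+2) + 95561149572716542473987943162076437848636254060000 * BB (k+1)"
  by (simp add: numeral_eq_Suc)
lemma BB_0: "BB 0 = -433418765223" by simp
lemma BB_1: "BB 1 = 1888717687956595658419024745123355300" by simp
lemma BB_2: "BB 2 = 9033510804520889223714137694139473177537774184500" by (simp add: numeral_eq_Suc)
lemma BB_3: "BB 3 = 924975031752167027814241962679093397954802451580523741593847186075210000" by (simp add: numeral_eq_Suc)
lemma BB_4: "BB 4 = 122374526622563059352299400945145635829716538559112191030682054945090474103352228210800000"
  using BB_rec[of 0] BB_3 BB_2 BB_1 by simp
lemma BB_5: "BB 5 = 10580341765102903259286744729409691569602495329403876462396699366425715559009761023651722028582981754000000"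
  using BB_rec[of 1] BB_4 BB_3 BB_2 by simp
lemma BB_6: "BB 6 = 747083469553911273388081675407874955391988192159135761833978515058950392569630113030360493770790735787186714545397120000000"
  using BB_rec[of 2] BB_5 BB_4 BB_3 by simp
lemma BB_7: "BB 7 = 46492591708999096507919742809833953299681070875546344164004288937278279655639170193214872798108052017821346037871452890380976187021600000000"
  using BB_rec[of 3] BB_6 BB_5 BB_4 by simp
lemma BB_8: "BB 8 = 2641303747418077784040584369667037012473650404244365091820633892243157149165052156510814762694425474356972848501262293192679287123795154822566179528000000000"
  using BB_rec[of 4] BB_7 BB_6 BB_5 by simp
lemma BB_9: "BB 9 = 139550722155926464786983913416569033139519426449190724159778682475894811037183796485543920990789721659365435793085831829188559932958916541240001535072397423030313440000000000"
  using BB_rec[of 5] BB_8 BB_7 BB_6 by simp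
lemma BB_10: "BB 10 = 6927277814592826134282492974414907066139445393222181601685270205714857263330592225911454122666358300088664485005467363235829250079059044706656796241248459639860830273577698634307200000000000"
  using BB_rec[of 6] BB_9 BB_8 BB_7 by simp
lemma BB_11: "BB 11 = 324780645621487125966751166879020371271741259486785565956998381341991852692915367170740486661068411644902798007226453044518502980330850534126004377168667296093695155634741047750506434790872661216000000000000"
  using BB_rec[of 7] BB_10 BB_9 BB_8 by simp
lemma BB_pos: "k \<in> {1..8} \<Longrightarrow> BB k > 0"
proof -
  assume "k \<in> {1..8}"
  hence "k = 1 \<or> k = 2 \<or> k = 3 \<or> k = 4 \<or> k = 5 \<or> k = 6 \<or> k = 7 \<or> k = 8" by auto
  thus ?thesis by (auto simp: BB_1 BB_2 BB_3 BB_4 BB_5 BB_6 BB_7 BB_8)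
qed
lemma rec_consts: "alC = 132105288195229860 / deltaC" "beC = -125555150451831600 / deltaC" "gaC = 41305844946860000 / deltaC"
  by (simp_all add: alC_def beC_def gaC_def deltaC_def)
definition "l0 = ((90017/10000)::real)"
definition "l1 = ((- 111981/6250)::real)"
definition "l2 = ((99901/10000)::real)"
definition "p0 = ((- 202063/25000)::real)"
definition "p1 = ((904897/50000)::real)"
definition "p2 = ((- 1009101/100000)::real)"
definition "q0 = ((113863/25000)::real)"
definition "q1 = ((- 130377/20000)::real)"
definition "q2 = ((45643/25000)::real)"
definition "tauC = ((9047/10000)::real)"
definition "LL x y z = l0*x + l1*y + l2*z"
definition "MM1 x y z = p0*x + p1*y + p2*z"
definition "MM2 x y z = q0*x + q1*y + q2*z"
definition "inC x y z \<longleftrightarrow> 0 \<le> LL x y z \<and> (MM1 x y z)^2 + (MM2 x y z)^2 \<le> (LL x y z)^2"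
definition "nxt x y z = gaC*x + beC*y + alC*z"
lemmas cdefs = l0_def l1_def l2_def p0_def p1_def p2_def q0_def q1_def q2_def tauC_def alC_def beC_def gaC_def
lemma inC_step: "inC x y z \<Longrightarrow> inC y z (nxt x y z)"
  unfolding inC_def LL_def MM1_def MM2_def nxt_def
  apply (erule conjE)
  apply (rule cone_step[where ua="(750426518517152850233571531449924/787383445025508836188713261070039)" and ub="(- 824756391654311429337550424/787383445025508836188713261070039)" and uc="(- 1497820724653667971989124814/787383445025508836188713261070039)" and tau=tauC])
  apply assumption
  apply assumption
  by (simp_all add: cdefs power2_eq_square)
lemma inC_nonneg: "inC x y z \<Longrightarrow> 0 \<le> x \<and> x \<le> 2 * LL x y z"
  unfolding inC_def LL_def MM1_def MM2_def
  apply (erule conjE)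
  apply (rule cone_bound[where ua="(16370004760850000/16370100732796001)" and ub="(16206305586900000/16370100732796001)" and uc="(3932200000/16370100732796001)"])
  apply assumption
  apply assumption
  by (simp_all add: cdefs power2_eq_square)
lemma inC_decay: "inC x y z \<Longrightarrow> LL y z (nxt x y z) \<le> LL x y z"
  unfolding inC_def LL_def MM1_def MM2_def nxt_def
  apply (erule conjE)
  apply (rule cone_decay[where ua="(750426518517152850233571531449924/787383445025508836188713261070039)" and ub="(- 824756391654311429337550424/787383445025508836188713261070039)" and uc="(- 1497820724653667971989124814/787383445025508836188713261070039)"])
  apply assumption
  apply assumption
  by (simp_all add: cdefs power2_eq_square)
lemma inC_scale: "s > 0 \<Longrightarrow> inC (s*x) (s*y) (s*z) \<longleftrightarrow> inC x y z"
proof -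
  assume s: "s > 0"
  have "LL (s*x) (s*y) (s*z) = s * LL x y z" "MM1 (s*x) (s*y) (s*z) = s * MM1 x y z" "MM2 (s*x) (s*y) (s*z) = s * MM2 x y z"
    by (simp_all add: LL_def MM1_def MM2_def algebra_simps)
  thus ?thesis using s unfolding inC_def by (simp add: power_mult_distrib zero_le_mult_iff flip: distrib_left)
qed
lemma inC_9int: "inC (of_int (BB 9) * deltaC^2) (of_int (BB 10) * deltaC) (of_int (BB 11))"
  unfolding inC_def LL_def MM1_def MM2_def BB_9 BB_10 BB_11 by (simp add: cdefs deltaC_def)lemma deriv_local:
  fixes f g :: "real \<Rightarrow> real"
  assumes U: "open U" and eq: "\<And>y. y \<in> U \<Longrightarrow> f y = g y" and y: "y \<in> U"
  shows "(deriv ^^ k) f y = (deriv ^^ k) g y"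
  using y
proof (induction k arbitrary: y)
  case 0 thus ?case using eq by simp
next
  case (Suc k)
  have "eventually (\<lambda>z. z \<in> U) (nhds y)" using U Suc.prems by (rule eventually_nhds_in_open)
  hence "eventually (\<lambda>z. (deriv ^^ k) f z = (deriv ^^ k) g z) (nhds y)"
    by (rule eventually_mono) (use Suc.IH in auto)
  hence "deriv ((deriv ^^ k) f) y = deriv ((deriv ^^ k) g) y" by (rule deriv_cong_ev) simp
  thus ?case by simp
qed

lemma conv_radius_fps_deriv_iter:
  fixes F :: "real fps"
  shows "fps_conv_radius F \<le> fps_conv_radius ((fps_deriv ^^ k) F)"
proof (induction k)
  case 0 thus ?case by simp
next
  case (Suc k)
  thus ?case using fps_conv_radius_deriv[of "(fps_deriv ^^ k) F"] by simp
qed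

lemma deriv_fps_shift:
  fixes F :: "real fps"
  assumes R: "ereal R \<le> fps_conv_radius F" and y: "\<bar>y - a\<bar> < R"
  shows "(deriv ^^ k) (\<lambda>y. eval_fps F (y - a)) y = eval_fps ((fps_deriv ^^ k) F) (y - a)"
  using y
proof (induction k arbitrary: y)
  case 0 thus ?case by simp
next
  case (Suc k)
  define G where "G = (fps_deriv ^^ k) F"
  have U: "open {z::real. \<bar>z - a\<bar> < R}"
    by (rule open_Collect_less) (intro continuous_intros)+
  have "eventually (\<lambda>z. z \<in> {z::real. \<bar>z - a\<bar> < R}) (nhds y)"
    using U Suc.prems by (intro eventually_nhds_in_open) auto
  hence "eventually (\<lambda>z. (deriv ^^ k) (\<lambda>y. eval_fps F (y - a)) z = eval_fps G (z - a)) (nhds y)"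
    by (rule eventually_mono) (use Suc.IH in \<open>auto simp: G_def\<close>)
  hence e1: "deriv ((deriv ^^ k) (\<lambda>y. eval_fps F (y - a))) y = deriv (\<lambda>z. eval_fps G (z - a)) y"
    by (rule deriv_cong_ev) simp
  have "ereal (norm (y - a)) < fps_conv_radius G"
    using Suc.prems R conv_radius_fps_deriv_iter[of F k] unfolding G_def
    by (metis less_ereal.simps(1) order_less_le_trans real_norm_def)
  hence d1: "(eval_fps G has_field_derivative eval_fps (fps_deriv G) (y - a)) (at (y - a))"
    by (rule has_field_derivative_eval_fps)
  have d2: "((\<lambda>z. z - a) has_field_derivative 1) (at y)"
    by (auto intro!: derivative_eq_intros)
  have "((\<lambda>z. eval_fps G (z - a)) has_field_derivative eval_fps (fps_deriv G) (y - a) * 1) (at y)"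
    using DERIV_chain2[OF d1 d2] .
  hence "deriv (\<lambda>z. eval_fps G (z - a)) y = eval_fps (fps_deriv G) (y - a)"
    by (simp add: DERIV_imp_deriv)
  thus ?case using e1 by (simp add: G_def)
qed

lemma fps_deriv_iter_nonneg:
  fixes F :: "real fps"
  assumes "\<And>n. n \<ge> 1 \<Longrightarrow> fps_nth F n \<ge> 0"
  shows "fps_nth ((fps_deriv ^^ Suc k) F) n \<ge> 0"
proof (induction k arbitrary: n)
  case 0 thus ?case using assms[of "Suc n"] by (simp add: fps_deriv_nth)
next
  case (Suc k)
  have "fps_nth ((fps_deriv ^^ Suc (Suc k)) F) n = of_nat (n+1) * fps_nth ((fps_deriv ^^ Suc k) F) (Suc n)"
    by (simp add: fps_deriv_nth)
  thus ?case using Suc.IH[of "Suc n"] by simp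
qed

lemma eval_fps_nonneg:
  fixes G :: "real fps"
  assumes "\<And>n. fps_nth G n \<ge> 0" "0 \<le> s" "ereal s < fps_conv_radius G"
  shows "eval_fps G s \<ge> 0"
  unfolding eval_fps_def
  by (rule suminf_nonneg) (use summable_fps[of s G] assms in auto)
definition aa :: real where "aa = -5687/839"
definition Na :: "real poly" where "Na = [:(- 1325439649/7944125976482376070), (7156364027512/4734282465126565), (- 4685220141/11285536269670), (1246/384649):]"
definition Da :: "real poly" where "Da = [:(48098875986026039/3376752824405805), (- 5248521581058/1341578396665), (2210228/5944315), (- 4/327):]"

lemma shift3:
  fixes n0 n1 n2 n3 m0 m1 m2 m3 a z :: real
  assumes "m0 = n0 + n1*a + n2*a^2 + n3*a^3" "m1 = n1 + 2*n2*a + 3*n3*a^2" "m2 = n2 + 3*n3*a" "m3 = n3"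
  shows "poly [:n0,n1,n2,n3:] (a+z) = poly [:m0,m1,m2,m3:] z"
  unfolding assms by (simp add: algebra_simps power2_eq_square power3_eq_cube)

lemma Na_shift: "poly psi32_num (aa + z) = poly Na z"
  unfolding psi32_num_def Na_def aa_def by (rule shift3) (simp_all add: power2_eq_square power3_eq_cube)

lemma Da_shift: "poly psi32_den (aa + z) = poly Da z"
  unfolding psi32_den_def Da_def aa_def by (rule shift3) (simp_all add: power2_eq_square power3_eq_cube)

definition bb :: "nat \<Rightarrow> real" where "bb k = of_int (BB k) / (deltaC ^ k * EC)"

lemma deltaC_pos: "deltaC > 0" and EC_pos: "EC > 0"
  by (simp_all add: deltaC_def EC_def)

lemma rec_piece:
  fixes A B d E :: real
  assumes "d > 0" "E > 0" "k = j+n+m"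
  shows "A/d^m * (B/(d^(j+n)*E)) = A*B/(d^k*E)"
  using assms by (simp add: power_add field_simps)

lemma rec_generic:
  fixes d E B1 B2 B3 B4 A1 A2 A3 al be ga :: real
  assumes "d > 0" "E > 0" "B4 = A1*B3+A2*B2+A3*B1" "al = A1/d" "be = A2/d^2" "ga = A3/d^3"
  shows "B4/(d^(j+4)*E) = ga*(B1/(d^(j+1)*E)) + be*(B2/(d^(j+2)*E)) + al*(B3/(d^(j+3)*E))"
proof -
  have p1: "ga*(B1/(d^(j+1)*E)) = A3*B1/(d^(j+4)*E)" unfolding assms(6) by (rule rec_piece[OF assms(1,2)]) simp
  have p2: "be*(B2/(d^(j+2)*E)) = A2*B2/(d^(j+4)*E)" unfolding assms(5) by (rule rec_piece[OF assms(1,2)]) simp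
  have p3: "al*(B3/(d^(j+3)*E)) = A1*B3/(d^(j+4)*E)" unfolding assms(4) using rec_piece[OF assms(1,2), of "j+4" j 3 1 A1 B3] by simp
  show ?thesis unfolding p1 p2 p3 assms(3) by (simp add: add_divide_distrib algebra_simps)
qed

lemma bb_rec4: "bb (j+4) = nxt (bb (j+1)) (bb (j+2)) (bb (j+3))"
proof -
  have "of_int (BB (j+4)) = 132105288195229860 * of_int (BB (j+3)) + -6039061610989489325518572843032400 * of_int (BB (j+2)) + 95561149572716542473987943162076437848636254060000 * (of_int (BB (j+1))::real)"
    unfolding BB_rec by simp
  show ?thesis
    unfolding bb_def nxt_def
    by (rule rec_generic[OF deltaC_pos EC_pos \<open>of_int (BB (j+4)) = _\<close>]) (simp_all add: deltaC_def alC_def beC_def gaC_def)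
qed

lemma bb_rec: "k \<ge> 1 \<Longrightarrow> bb (k+3) = nxt (bb k) (bb (k+1)) (bb (k+2))"
proof -
  assume "k \<ge> 1"
  then obtain j where k: "k = j + 1" by (metis add.commute le_add_diff_inverse)
  have e1: "bb (k+3) = bb (j+4)" by (rule arg_cong[where f=bb]) (simp add: k)
  have e2: "bb (k+2) = bb (j+3)" by (rule arg_cong[where f=bb]) (simp add: k)
  have e3: "bb (k+1) = bb (j+2)" by (rule arg_cong[where f=bb]) (simp add: k)
  have e4: "bb k = bb (j+1)" by (rule arg_cong[where f=bb]) (simp add: k)
  show ?thesis unfolding e1 e2 e3 e4 by (rule bb_rec4)
qed

lemma bb_recS: "k \<ge> 1 \<Longrightarrow> bb (Suc (Suc (Suc k))) = nxt (bb k) (bb (Suc k)) (bb (Suc (Suc k)))"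
  using bb_rec[of k] by (simp add: eval_nat_numeral)

lemma inC_9: "inC (bb 9) (bb (Suc 9)) (bb (Suc (Suc 9)))"
proof -
  define s where "s = 1/(deltaC^11 * EC)"
  have s: "s > 0" using deltaC_pos EC_pos by (simp add: s_def)
  have d: "deltaC \<noteq> 0" "EC \<noteq> 0" using deltaC_pos EC_pos by auto
  have p: "deltaC^11 = deltaC^9*deltaC^2" "deltaC^11 = deltaC^10*deltaC" by (simp_all flip: power_add power_Suc2)
  have "bb 9 = s * (of_int (BB 9) * deltaC^2)"
    unfolding bb_def s_def p(1) using d by (simp add: field_simps)
  moreover have "bb (Suc 9) = s * (of_int (BB 10) * deltaC)"
    unfolding bb_def s_def p(2) using d by (simp add: field_simps)
  moreover have "bb (Suc (Suc 9)) = s * (of_int (BB 11))"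
    unfolding bb_def s_def using d by (simp add: field_simps)
  ultimately show ?thesis using inC_scale[OF s] inC_9int by simp
qed

lemma cone_all: "k \<ge> 9 \<Longrightarrow> inC (bb k) (bb (Suc k)) (bb (Suc (Suc k))) \<and>
   LL (bb k) (bb (Suc k)) (bb (Suc (Suc k))) \<le> LL (bb 9) (bb (Suc 9)) (bb (Suc (Suc 9)))"
proof (induction k rule: dec_induct)
  case base show ?case using inC_9 by simp
next
  case (step k)
  have r: "bb (Suc (Suc (Suc k))) = nxt (bb k) (bb (Suc k)) (bb (Suc (Suc k)))"
    using step.hyps by (intro bb_recS) simp
  have "inC (bb (Suc k)) (bb (Suc (Suc k))) (bb (Suc (Suc (Suc k))))"
    unfolding r using inC_step step.IH by blast
  moreover have "LL (bb (Suc k)) (bb (Suc (Suc k))) (bb (Suc (Suc (Suc k)))) \<le> LL (bb k) (bb (Suc k)) (bb (Suc (Suc k)))"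
    unfolding r using inC_decay step.IH by blast
  ultimately show ?case using step.IH by linarith
qed

lemma bb_nonneg: "k \<ge> 1 \<Longrightarrow> 0 \<le> bb k"
proof (cases "k \<le> 8")
  case True
  assume "k \<ge> 1"
  hence "BB k > 0" using True BB_pos by auto
  thus ?thesis unfolding bb_def using deltaC_pos EC_pos by simp
next
  case False
  hence "k \<ge> 9" by simp
  thus ?thesis using cone_all inC_nonneg by blast
qed

lemma bb_bound: "\<exists>B. \<forall>k. \<bar>bb k\<bar> \<le> B"
proof -
  define L9 where "L9 = LL (bb 9) (bb (Suc 9)) (bb (Suc (Suc 9)))"
  define S where "S = (\<Sum>k<9. \<bar>bb k\<bar>)"
  have L9: "0 \<le> L9" using inC_9 unfolding L9_def inC_def by simp
  have S: "0 \<le> S" unfolding S_def by (intro sum_nonneg) auto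
  have "\<bar>bb k\<bar> \<le> 2*L9 + S" for k
  proof (cases "k < 9")
    case True
    hence "\<bar>bb k\<bar> \<le> S" unfolding S_def by (intro member_le_sum) auto
    thus ?thesis using L9 by linarith
  next
    case False
    hence k: "k \<ge> 9" by simp
    from cone_all[OF k] have "inC (bb k) (bb (Suc k)) (bb (Suc (Suc k)))"
      and "LL (bb k) (bb (Suc k)) (bb (Suc (Suc k))) \<le> L9" unfolding L9_def by auto
    with inC_nonneg have "0 \<le> bb k \<and> bb k \<le> 2*L9" by fastforce
    thus ?thesis using S by linarith
  qed
  thus ?thesis by blast
qed

definition cc :: "nat \<Rightarrow> real" where "cc k = bb k / 10^k"
definition FF :: "real fps" where "FF = Abs_fps cc"

lemma FF_nth: "fps_nth FF n = cc n" by (simp add: FF_def)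

lemma FF_radius: "ereal 9 \<le> fps_conv_radius FF"
proof -
  obtain B where B: "\<And>k. \<bar>bb k\<bar> \<le> B" using bb_bound by blast
  have sg: "summable (\<lambda>n. B * (9/10::real)^n)"
    by (rule summable_mult, rule summable_geometric) simp
  have nb: "norm (cc n * 9^n) \<le> B * (9/10)^n" for n
  proof -
    have e1: "cc n * 9^n = bb n * (9/10)^n" unfolding cc_def power_divide by simp
    have "norm (cc n * 9^n) = \<bar>bb n\<bar> * (9/10)^n" unfolding e1 real_norm_def abs_mult by simp
    also have "\<dots> \<le> B * (9/10)^n" using B[of n] by (rule mult_right_mono) simp
    finally show ?thesis .
  qed
  have "summable (\<lambda>n. cc n * 9^n)" by (rule summable_comparison_test'[OF sg nb])
  hence "conv_radius cc \<ge> norm (9::real)" by (rule conv_radius_geI)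
  hence "conv_radius cc \<ge> 9" by simp
  moreover have "fps_conv_radius FF = conv_radius cc" unfolding fps_conv_radius_def FF_def by simp
  ultimately show ?thesis by simp
qed

lemma Da_deg: "degree Da \<le> 3" unfolding Da_def by simp
lemma Na_deg: "degree Na \<le> 3" unfolding Na_def by simp

lemma sum_0_3: "(\<Sum>i=0..3. g i) = g 0 + g 1 + g 2 + (g 3::real)" for g :: "nat \<Rightarrow> real"
proof -
  have "{0..3::nat} = {0,1,2,3}" by auto
  thus ?thesis by simp
qed

lemma sum_0_2: "(\<Sum>i=0..2. g i) = g 0 + g 1 + (g 2::real)" for g :: "nat \<Rightarrow> real"
proof -
  have "{0..2::nat} = {0,1,2}" by auto
  thus ?thesis by simp
qed

lemma sum_0_1: "(\<Sum>i=0..1. g i) = g 0 + (g 1::real)" for g :: "nat \<Rightarrow> real"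
proof -
  have "{0..1::nat} = {0,1}" by auto
  thus ?thesis by simp
qed

lemma coef_generic:
  fixes D0 D1 D2 D3 al be ga b1 b2 b3 b4 :: real
  assumes "D0*al + 10*D1 = 0" "D0*be + 100*D2 = 0" "D0*ga + 1000*D3 = 0" "b4 = ga*b1+be*b2+al*b3"
  shows "D0*(b4/10^(k+4)) + D1*(b3/10^(k+3)) + D2*(b2/10^(k+2)) + D3*(b1/10^(k+1)) = 0"
proof -
  have "D0*(b4/10^(k+4)) + D1*(b3/10^(k+3)) + D2*(b2/10^(k+2)) + D3*(b1/10^(k+1))
      = (D0*b4 + 10*D1*b3 + 100*D2*b2 + 1000*D3*b1)/10^(k+4)"
    by (simp add: power_add field_simps)
  also have "D0*b4 + 10*D1*b3 + 100*D2*b2 + 1000*D3*b1 = b1*(D0*ga + 1000*D3) + b2*(D0*be + 100*D2) + b3*(D0*al + 10*D1)"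
    unfolding assms(4) by (simp add: algebra_simps)
  also have "\<dots> = 0" using assms(1-3) by simp
  finally show ?thesis by simp
qed

lemma cc_0: "cc 0 = (- 433418765223/37002369098297859750622)" by (simp add: cc_def bb_def BB_0 deltaC_def EC_def)
lemma cc_1: "cc 1 = (94435884397829782920951237256167765/889886181224095452261669521166669223129)" by (simp add: cc_def bb_def BB_1 deltaC_def EC_def)
lemma cc_2: "cc 2 = (90335108045208892237141376941394731775377741845/85605050144752121159267039482786133225252785560190112062)" by (simp add: cc_def bb_def BB_2 deltaC_def EC_def)
lemma cc_3: "cc 3 = (462487515876083513907120981339546698977401225790261870796923593037605/2058753345344986347125375543611380979101500102141844047968391266729991209)" by (simp add: cc_def bb_def BB_3 deltaC_def EC_def)
lemma Da_coeffs: "coeff Da 0 = (48098875986026039/3376752824405805)" "coeff Da 1 = (- 5248521581058/1341578396665)" "coeff Da 2 = (2210228/5944315)" "coeff Da 3 = (- 4/327)"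
  by (simp_all add: Da_def numeral_2_eq_2 numeral_3_eq_3)
lemma Na_coeffs: "coeff Na 0 = (- 1325439649/7944125976482376070)" "coeff Na 1 = (7156364027512/4734282465126565)" "coeff Na 2 = (- 4685220141/11285536269670)" "coeff Na 3 = (1246/384649)"
  by (simp_all add: Na_def numeral_2_eq_2 numeral_3_eq_3)

lemma FF_mult: "fps_of_poly Da * FF = fps_of_poly Na"
proof (rule fps_ext)
  fix n
  have e: "fps_nth (fps_of_poly Da * FF) n = (\<Sum>i=0..n. coeff Da i * cc (n-i))"
    by (simp add: fps_mult_nth FF_nth)
  show "fps_nth (fps_of_poly Da * FF) n = fps_nth (fps_of_poly Na) n"
  proof (cases "n \<ge> 3")
    case True
    have "(\<Sum>i=0..n. coeff Da i * cc (n-i)) = (\<Sum>i=0..3. coeff Da i * cc (n-i))"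
    proof (rule sum.mono_neutral_right)
      show "\<forall>i\<in>{0..n} - {0..3}. coeff Da i * cc (n - i) = 0"
        using Da_deg by (auto intro!: coeff_eq_0)
    qed (use True in auto)
    also have "\<dots> = coeff Da 0 * cc n + coeff Da 1 * cc (n-1) + coeff Da 2 * cc (n-2) + coeff Da 3 * cc (n-3)"
      by (subst sum_0_3) simp
    finally have s: "fps_nth (fps_of_poly Da * FF) n = \<dots>" using e by simp
    show ?thesis
    proof (cases "n = 3")
      case True
      show ?thesis using s True
        by (simp add: Da_coeffs Na_coeffs cc_0 cc_1 cc_2 cc_3 Da_coeffs(2)[unfolded One_nat_def] cc_1[unfolded One_nat_def])
    next
      case False
      with \<open>n \<ge> 3\<close> have "n \<ge> 4" by simp
      then obtain k where k: "n = k + 4" by (metis add.commute le_add_diff_inverse)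
      have ks: "n - 1 = k + 3" "n - 2 = k + 2" "n - 3 = k + 1" using k by simp_all
      have r: "bb (k+4) = gaC*bb(k+1)+beC*bb(k+2)+alC*bb(k+3)" using bb_rec4[of k] unfolding nxt_def by simp
      have "coeff Da 0 * cc (k+4) + coeff Da 1 * cc (k+3) + coeff Da 2 * cc (k+2) + coeff Da 3 * cc (k+1) = 0"
        unfolding cc_def by (rule coef_generic[OF _ _ _ r]) (simp_all add: Da_coeffs Da_coeffs(2)[unfolded One_nat_def] alC_def beC_def gaC_def)
      moreover have "coeff Na n = 0" using Na_deg k by (intro coeff_eq_0) simp
      ultimately show ?thesis using s unfolding ks by (simp add: k)
    qed
  next
    case False
    hence "n = 0 \<or> n = 1 \<or> n = 2" by auto
    thus ?thesis using e
      by (auto simp: sum_0_2 sum_0_1 Da_coeffs Na_coeffs cc_0 cc_1 cc_2 Da_coeffs(2)[unfolded One_nat_def] cc_1[unfolded One_nat_def] Na_coeffs(2)[unfolded One_nat_def])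
  qed
qed

lemma FF_eval: "\<bar>z\<bar> < 9 \<Longrightarrow> poly Da z * eval_fps FF z = poly Na z"
proof -
  assume z: "\<bar>z\<bar> < 9"
  have "ereal (norm z) < ereal 9" using z by simp
  hence "norm z < fps_conv_radius FF" using FF_radius by (rule order_less_le_trans)
  hence "eval_fps (fps_of_poly Da * FF) z = eval_fps (fps_of_poly Da) z * eval_fps FF z"
    by (intro eval_fps_mult) auto
  thus ?thesis unfolding FF_mult by simp
qed

lemma ratfun_local:
  assumes "poly Q x \<noteq> 0"
  shows "poly (red_den P Q) x \<noteq> 0 \<and> ratfun P Q x = poly P x / poly Q x"
proof -
  define g where "g = gcd P Q"
  have gP: "P = red_num P Q * g" unfolding red_num_def g_def by simp
  have gQ: "Q = red_den P Q * g" unfolding red_den_def g_def by simp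
  have q: "poly Q x = poly (red_den P Q) x * poly g x" by (subst gQ) simp
  have p: "poly P x = poly (red_num P Q) x * poly g x" by (subst gP) simp
  from assms q have "poly (red_den P Q) x \<noteq> 0" "poly g x \<noteq> 0" by auto
  thus ?thesis unfolding ratfun_def p q by simp
qed

section \<open>The cubic\<close>

lemma num_cubic: "poly psi32_num y = - x0_cubic (-y) / 13451175530"
  unfolding psi32_num_def x0_cubic_def by (simp add: algebra_simps power2_eq_square power3_eq_cube)

lemma cubic_strict_mono:
  assumes "x < y" shows "x0_cubic x < x0_cubic y"
proof -
  define A :: real where "A = 43572620"
  define B :: real where "B = 880461561"
  define C :: real where "C = 5950520030"
  define u where "u = x + y"
  have diff: "x0_cubic y - x0_cubic x = (y - x) * (A*(x^2+x*y+y^2) - B*u + C)"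
    unfolding x0_cubic_def A_def B_def C_def u_def by (simp add: algebra_simps power2_eq_square power3_eq_cube)
  have q1: "A*(x^2+x*y+y^2) \<ge> (3*A/4)*u^2"
  proof -
    have "A*(x^2+x*y+y^2) - (3*A/4)*u^2 = (A/4)*(x-y)^2"
      unfolding u_def by (simp add: algebra_simps power2_eq_square)
    moreover have "(A/4)*(x-y)^2 \<ge> 0" unfolding A_def by simp
    ultimately show ?thesis by linarith
  qed
  have q2: "(3*A/4)*u^2 - B*u + C = (3*A/4)*(u - 2*B/(3*A))^2 + (C - B^2/(3*A))"
    unfolding A_def B_def C_def by (simp add: field_simps power2_eq_square)
  have q3: "C - B^2/(3*A) > 0" unfolding A_def B_def C_def by simp
  have "(3*A/4)*(u - 2*B/(3*A))^2 \<ge> 0" unfolding A_def by simp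
  hence "A*(x^2+x*y+y^2) - B*u + C > 0" using q1 q2 q3 by linarith
  moreover have "y - x > 0" using assms by simp
  ultimately have "x0_cubic y - x0_cubic x > 0" unfolding diff by simp
  thus ?thesis by simp
qed

lemma cubic_lo: "x0_cubic 6.778307398 < 0" unfolding x0_cubic_def by (simp add: power2_eq_square power3_eq_cube)
lemma cubic_hi: "x0_cubic 6.778307399 > 0" unfolding x0_cubic_def by (simp add: power2_eq_square power3_eq_cube)

definition r0 :: real where "r0 = (THE x. x0_cubic x = 0)"

lemma cubic_root_ex: "\<exists>x. 6.778307398 < x \<and> x < 6.778307399 \<and> x0_cubic x = 0"
proof -
  have "\<exists>x. 6.778307398 \<le> x \<and> x \<le> 6.778307399 \<and> x0_cubic x = 0"
    by (rule IVT) (use cubic_lo cubic_hi in \<open>auto simp: x0_cubic_def intro!: continuous_intros\<close>)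
  then obtain x where x: "6.778307398 \<le> x" "x \<le> 6.778307399" "x0_cubic x = 0" by blast
  have "x \<noteq> 6.778307398"
  proof
    assume e: "x = 6.778307398"
    have "x0_cubic 6.778307398 = 0" using x(3) unfolding e .
    thus False using cubic_lo by simp
  qed
  moreover have "x \<noteq> 6.778307399"
  proof
    assume e: "x = 6.778307399"
    have "x0_cubic 6.778307399 = 0" using x(3) unfolding e .
    thus False using cubic_hi by simp
  qed
  ultimately have "6.778307398 < x" "x < 6.778307399" using x(1,2) by linarith+
  thus ?thesis using x(3) by blast
qed

lemma cubic_roots: "{x. x0_cubic x = 0} = {r0}" and r0_bounds: "6.778307398 < r0" "r0 < 6.778307399"
  and r0_root: "x0_cubic r0 = 0"
proof -
  obtain x where x: "6.778307398 < x" "x < 6.778307399" "x0_cubic x = 0" using cubic_root_ex by blast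
  have uniq: "y = x" if "x0_cubic y = 0" for y
  proof (rule ccontr)
    assume "y \<noteq> x"
    hence "y < x \<or> x < y" by linarith
    moreover have "\<not> y < x" using cubic_strict_mono[of y x] that x(3) by linarith
    moreover have "\<not> x < y" using cubic_strict_mono[of x y] that x(3) by linarith
    ultimately show False by blast
  qed
  have rx: "r0 = x" unfolding r0_def
  proof (rule the_equality)
    show "x0_cubic x = 0" by (rule x(3))
    show "\<And>y. x0_cubic y = 0 \<Longrightarrow> y = x" by (rule uniq)
  qed
  show "{x. x0_cubic x = 0} = {r0}"
  proof
    show "{x. x0_cubic x = 0} \<subseteq> {r0}" using uniq rx by blast
    show "{r0} \<subseteq> {x. x0_cubic x = 0}" using x(3) rx by blast
  qed
  show "6.778307398 < r0" "r0 < 6.778307399" "x0_cubic r0 = 0" using x rx by simp_all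
qed

lemma Min_eq: "Min {x. x0_cubic x = 0} = r0" unfolding cubic_roots by simp

lemma num_nonneg: "-r0 \<le> y \<Longrightarrow> poly psi32_num y \<ge> 0"
proof -
  assume "-r0 \<le> y"
  hence "-y \<le> r0" by simp
  hence "x0_cubic (-y) \<le> x0_cubic r0"
  proof (cases "-y = r0")
    case True thus ?thesis by simp
  next
    case False
    hence "-y < r0" using \<open>-y \<le> r0\<close> by linarith
    thus ?thesis using cubic_strict_mono[of "-y" r0] by linarith
  qed
  moreover note r0_root
  ultimately show ?thesis unfolding num_cubic by simp
qed

lemma num_neg: "y < -r0 \<Longrightarrow> poly psi32_num y < 0"
proof -
  assume "y < -r0"
  hence "r0 < -y" by simp
  hence "x0_cubic r0 < x0_cubic (-y)" by (rule cubic_strict_mono)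
  moreover note r0_root
  ultimately show ?thesis unfolding num_cubic by simp
qed

lemma den_pos: "y \<le> 0 \<Longrightarrow> poly psi32_den y \<ge> 1"
proof -
  assume y: "y \<le> 0"
  have "poly psi32_den y = 1 + (150/269)*(-y) + (8/65)*y^2 + (4/327)*(-y)^3"
    unfolding psi32_den_def by (simp add: algebra_simps power2_eq_square power3_eq_cube)
  moreover have "(150/269)*(-y) \<ge> 0" "(8/65)*y^2 \<ge> 0" "(4/327)*(-y)^3 \<ge> 0" using y by auto
  ultimately show ?thesis by linarith
qed

section \<open>Absolute monotonicity on [-r0, 0]\<close>

definition UU :: "real set" where "UU = {y. \<bar>y - aa\<bar> < 9} \<inter> {y. poly psi32_den y \<noteq> 0}"

lemma UU_open: "open UU"
proof -
  have "open {y::real. \<bar>y - aa\<bar> < 9}"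
    by (rule open_Collect_less) (auto intro!: continuous_intros)
  moreover have "open {y. poly psi32_den y \<noteq> 0}"
    by (rule open_Collect_neq) (auto intro!: continuous_intros)
  ultimately show ?thesis unfolding UU_def by (rule open_Int)
qed

lemma ratfun_eq_fps: "y \<in> UU \<Longrightarrow> ratfun psi32_num psi32_den y = eval_fps FF (y - aa)"
proof -
  assume y: "y \<in> UU"
  hence d: "poly psi32_den y \<noteq> 0" and z: "\<bar>y - aa\<bar> < 9" unfolding UU_def by auto
  have "ratfun psi32_num psi32_den y = poly psi32_num y / poly psi32_den y"
    using ratfun_local[OF d] by simp
  also have "\<dots> = poly Na (y - aa) / poly Da (y - aa)"
    using Na_shift[of "y - aa"] Da_shift[of "y - aa"] by simp
  also have "\<dots> = eval_fps FF (y - aa)"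
  proof -
    have "poly Da (y - aa) \<noteq> 0" using d Da_shift[of "y - aa"] by simp
    thus ?thesis using FF_eval[OF z] by (simp add: field_simps)
  qed
  finally show ?thesis .
qed

lemma aa_lt: "aa < -r0" using r0_bounds unfolding aa_def by simp

lemma am_interval: "-r0 \<le> y \<Longrightarrow> y \<le> 0 \<Longrightarrow> abs_monotonic_at psi32_num psi32_den y"
proof -
  assume y1: "-r0 \<le> y" and y2: "y \<le> 0"
  have dp: "poly psi32_den y \<ge> 1" using den_pos[OF y2] .
  hence d: "poly psi32_den y \<noteq> 0" by simp
  have r: "-r0 > -6.778307399" using r0_bounds by simp
  have s0: "0 < y - aa" using aa_lt y1 by simp
  have s9: "y - aa < 9" using y2 unfolding aa_def by simp
  have yU: "y \<in> UU" unfolding UU_def using s0 s9 d by auto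
  have "(deriv ^^ k) (ratfun psi32_num psi32_den) y \<ge> 0" for k
  proof (cases k)
    case 0
    have "ratfun psi32_num psi32_den y = poly psi32_num y / poly psi32_den y"
      using ratfun_local[OF d] by simp
    moreover have "poly psi32_num y \<ge> 0" using num_nonneg[OF y1] .
    ultimately show ?thesis using 0 dp by simp
  next
    case (Suc j)
    have "(deriv ^^ k) (ratfun psi32_num psi32_den) y = (deriv ^^ k) (\<lambda>y. eval_fps FF (y - aa)) y"
      by (rule deriv_local[OF UU_open ratfun_eq_fps yU])
    also have "\<dots> = eval_fps ((fps_deriv ^^ k) FF) (y - aa)"
      by (rule deriv_fps_shift[OF FF_radius]) (use s0 s9 in simp)
    also have "\<dots> \<ge> 0"
    proof (rule eval_fps_nonneg)
      show "\<And>n. fps_nth ((fps_deriv ^^ k) FF) n \<ge> 0" unfolding Suc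
        by (rule fps_deriv_iter_nonneg) (simp add: FF_nth cc_def bb_nonneg)
      show "0 \<le> y - aa" using s0 by simp
      have "ereal (y - aa) < ereal 9" using s9 by simp
      also have "\<dots> \<le> fps_conv_radius FF" by (rule FF_radius)
      also have "\<dots> \<le> fps_conv_radius ((fps_deriv ^^ k) FF)" by (rule conv_radius_fps_deriv_iter)
      finally show "ereal (y - aa) < fps_conv_radius ((fps_deriv ^^ k) FF)" .
    qed
    finally show ?thesis .
  qed
  moreover have "poly (red_den psi32_num psi32_den) y \<noteq> 0" using ratfun_local[OF d] by simp
  ultimately show ?thesis unfolding abs_monotonic_at_def by simp
qed

lemma not_am: "r > r0 \<Longrightarrow> \<not> abs_monotonic_at psi32_num psi32_den (-r)"
proof
  assume r: "r > r0" and am: "abs_monotonic_at psi32_num psi32_den (-r)"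
  have r0p: "r0 > 0" using r0_bounds by simp
  have dp: "poly psi32_den (-r) \<ge> 1" using den_pos[of "-r"] r r0p by simp
  hence d: "poly psi32_den (-r) \<noteq> 0" by simp
  have "ratfun psi32_num psi32_den (-r) = poly psi32_num (-r) / poly psi32_den (-r)"
    using ratfun_local[OF d] by simp
  moreover have "poly psi32_num (-r) < 0" using num_neg[of "-r"] r by simp
  ultimately have "ratfun psi32_num psi32_den (-r) < 0" using dp by (simp add: divide_neg_pos)
  moreover have "(deriv ^^ 0) (ratfun psi32_num psi32_den) (-r) \<ge> 0"
    using am unfolding abs_monotonic_at_def by blast
  ultimately show False by simp
qed

lemma radius_eq: "radius_am psi32_num psi32_den = ereal r0"
proof -
  define S where "S = {r. r \<ge> 0 \<and> (\<forall>x\<in>{-r..0}. abs_monotonic_at psi32_num psi32_den x)} \<union> {0::real}"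
  have r0p: "r0 > 0" using r0_bounds by simp
  have inS: "r0 \<in> S" unfolding S_def using am_interval r0p by auto
  have le: "r \<le> r0" if "r \<in> S" for r
  proof (rule ccontr)
    assume "\<not> r \<le> r0"
    hence rr: "r > r0" by simp
    with r0p that have "\<forall>x\<in>{-r..0}. abs_monotonic_at psi32_num psi32_den x" unfolding S_def by auto
    moreover have "-r \<in> {-r..0}" using rr r0p by simp
    ultimately show False using not_am[OF rr] by blast
  qed
  have "Sup (ereal ` S) = ereal r0"
  proof (rule antisym)
    show "Sup (ereal ` S) \<le> ereal r0" by (rule Sup_least) (use le in auto)
    show "ereal r0 \<le> Sup (ereal ` S)" by (rule Sup_upper) (use inS in auto)
  qed
  thus ?thesis unfolding radius_am_def S_def .
qed

lemma in_Pi: "(psi32_num, psi32_den) \<in> Pi_class 3 3 2"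
proof -
  have "(\<lambda>z::real. poly psi32_num z / poly psi32_den z - exp z) \<in> O[at 0](\<lambda>z. z ^ 3)"
    unfolding psi32_num_def psi32_den_def by (simp, real_asymp)
  moreover have "psi32_den \<noteq> 0" unfolding psi32_den_def by simp
  moreover have "degree psi32_num \<le> 3" "degree psi32_den \<le> 3"
    unfolding psi32_num_def psi32_den_def by simp_all
  ultimately show ?thesis unfolding Pi_class_def by simp
qed

theorem mainTheorem16:
  shows "(psi32_num, psi32_den) \<in> Pi_class 3 3 2
    \<and> radius_am psi32_num psi32_den = ereal (Min {x. x0_cubic x = 0})
    \<and> 6.778307398 < Min {x. x0_cubic x = 0} \<and> Min {x. x0_cubic x = 0} < 6.778307399
    \<and> R_opt 3 3 2 > 6"
proof -
  have "radius_am psi32_num psi32_den \<le> R_opt 3 3 2"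
    unfolding R_opt_def by (rule Sup_upper) (use in_Pi in force)
  hence le: "ereal r0 \<le> R_opt 3 3 2" using radius_eq by simp
  have "(6::ereal) < ereal r0" using r0_bounds by simp
  hence "R_opt 3 3 2 > 6" using le by (rule order_less_le_trans)
  thus ?thesis using in_Pi radius_eq r0_bounds unfolding Min_eq by simp
qed

end
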